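(* Let $n=2^r$ and $m>n$. Any Sherali–Adams refutation of the binary $\mathrm{PHP}^m_n$ has to contain at least $e^{n/(32\log_2^2 n)}$ terms.
   Context: Binary Pigeonhole Principle $\mathrm{PHP}^m_n$ ($n=2^r$): pigeons $[m]$, holes $[n]$ with distinct $r$-bit representations $a_1\dots a_r$; variables $P_{i,j}$ ($i\in[m]$, $j\in[r]$); $X^1=X$, $X^0=\neg X$. Clauses: for every hole $a$ and pigeons $i\ne i'$, $\bigvee_j P_{i,j}^{1-a_j}\vee\bigvee_j P_{i',j}^{1-a_j}$. Sherali–Adams (SA): for every conjunction $D$ of literals (as a set; $\emptyset$ empty) there is a real variable (term) $Z_D$, $Z_\emptyset=1$. Lifts by $D$: of a clause $l_1\vee\dots\vee l_t$, $Z_{l_1\wedge D}+\dots+Z_{l_t\wedge D}\ge Z_D$; of negation equalities, $Z_{v\wedge D}+Z_{\neg v\wedge D}=Z_D$; of bounds, $0\le Z_{l\wedge D}\le Z_D$. An SA refutation is a set of such lifted constraints with empty common real solution set; the terms it contains are the variables $Z_D$ occurring in it. *)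

theory Defs
  imports Complex_Main
begin

text \<open>Variables P_{i,j} are pairs (i,j) with i < m (pigeon), j < r (bit), 0-based.
  A literal is (v, b): (v, True) is the positive literal v, (v, False) is its negation.
  A conjunction D of literals is a set of literals; the SA term Z_D is Z D.\<close>

type_synonym var = "nat \<times> nat"
type_synonym lit = "var \<times> bool"

definition lits :: "nat \<Rightarrow> nat \<Rightarrow> lit set" where
  "lits m r = {((i, j), b). i < m \<and> j < r}"

text \<open>Clauses of binary PHP: for a hole a (bits a j, j < r) and pigeons i \<noteq> i',
  the clause of literals P_{i,j}^{1-a_j} and P_{i',j}^{1-a_j}.  The literal
  X^{1-a_j} is positive iff a_j = 0, i.e. its polarity is \<not> a j.\<close>

definition bphp_clause :: "nat \<Rightarrow> nat \<Rightarrow> lit set \<Rightarrow> bool" where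
  "bphp_clause m r C \<longleftrightarrow>
     (\<exists>a :: nat \<Rightarrow> bool. \<exists>i i'. i < m \<and> i' < m \<and> i \<noteq> i' \<and>
        C = {((i, j), \<not> a j) | j. j < r} \<union> {((i', j), \<not> a j) | j. j < r})"

text \<open>Lifted SA constraints: lift of a clause C by D, lift of the negation
  equality for variable v by D, lift of the bounds for literal l by D.\<close>

datatype sa_constr =
    ClauseLift "lit set" "lit set"
  | NegLift var "lit set"
  | BoundLift lit "lit set"

fun sa_valid :: "nat \<Rightarrow> nat \<Rightarrow> sa_constr \<Rightarrow> bool" where
  "sa_valid m r (ClauseLift C D) \<longleftrightarrow> bphp_clause m r C \<and> D \<subseteq> lits m r"
| "sa_valid m r (NegLift v D) \<longleftrightarrow> fst v < m \<and> snd v < r \<and> D \<subseteq> lits m r"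
| "sa_valid m r (BoundLift l D) \<longleftrightarrow> l \<in> lits m r \<and> D \<subseteq> lits m r"

fun sa_sat :: "(lit set \<Rightarrow> real) \<Rightarrow> sa_constr \<Rightarrow> bool" where
  "sa_sat Z (ClauseLift C D) \<longleftrightarrow> (\<Sum>l\<in>C. Z (insert l D)) \<ge> Z D"
| "sa_sat Z (NegLift v D) \<longleftrightarrow> Z (insert (v, True) D) + Z (insert (v, False) D) = Z D"
| "sa_sat Z (BoundLift l D) \<longleftrightarrow> 0 \<le> Z (insert l D) \<and> Z (insert l D) \<le> Z D"

fun sa_terms :: "sa_constr \<Rightarrow> lit set set" where
  "sa_terms (ClauseLift C D) = insert D ((\<lambda>l. insert l D) ` C)"
| "sa_terms (NegLift v D) = {D, insert (v, True) D, insert (v, False) D}"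
| "sa_terms (BoundLift l D) = {D, insert l D}"

definition sa_refutation :: "nat \<Rightarrow> nat \<Rightarrow> sa_constr set \<Rightarrow> bool" where
  "sa_refutation m r S \<longleftrightarrow>
     (\<forall>c\<in>S. sa_valid m r c) \<and> \<not> (\<exists>Z. Z {} = 1 \<and> (\<forall>c\<in>S. sa_sat Z c))"

definition sa_num_terms :: "sa_constr set \<Rightarrow> nat" where
  "sa_num_terms S = card (\<Union>c\<in>S. sa_terms c)"

end

theory Submission
  imports Defs "HOL-Library.FuncSet"
begin


definition pig :: "lit set \<Rightarrow> nat set" where
  "pig D = (\<lambda>l. fst (fst l)) ` D"

definition satg :: "(nat \<Rightarrow> nat \<Rightarrow> bool) \<Rightarrow> lit set \<Rightarrow> bool" where
  "satg g D \<longleftrightarrow> (\<forall>l\<in>D. g (fst (fst l)) (snd (fst l)) = snd l)"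

definition Gset :: "(nat \<Rightarrow> nat \<times> bool) \<Rightarrow> (nat \<times> bool \<Rightarrow> (nat \<Rightarrow> bool) set) \<Rightarrow> nat set
   \<Rightarrow> (nat \<Rightarrow> nat \<Rightarrow> bool) set" where
  "Gset \<tau> B P = {g \<in> PiE P (\<lambda>p. B (\<tau> p)). inj_on g P}"

lemma ext_count:
  assumes fin: "finite P" and q: "q \<notin> P"
    and finB: "\<And>t. finite (B t)"
    and disj: "\<And>t t'. t \<noteq> t' \<Longrightarrow> B t \<inter> B t' = {}"
    and inv: "\<And>g h. g \<in> PiE P (\<lambda>p. B (\<tau> p)) \<Longrightarrow> \<Phi> (g(q := h)) = \<Phi> g"
  shows "card {g \<in> Gset \<tau> B (insert q P). \<Phi> g}
     = card {g \<in> Gset \<tau> B P. \<Phi> g} * (card (B (\<tau> q)) - card {p \<in> P. \<tau> p = \<tau> q})"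
proof -
  let ?A = "{g \<in> Gset \<tau> B P. \<Phi> g}"
  let ?F = "\<lambda>(g, h). g(q := h)"
  let ?S = "SIGMA g:?A. B (\<tau> q) - g ` P"
  have finPi: "finite (PiE P (\<lambda>p. B (\<tau> p)))" using fin finB by (simp add: finite_PiE)
  have finA: "finite ?A" by (rule finite_subset[OF _ finPi]) (auto simp: Gset_def)
  have eq: "{g \<in> Gset \<tau> B (insert q P). \<Phi> g} = ?F ` ?S"
  proof
    show "{g \<in> Gset \<tau> B (insert q P). \<Phi> g} \<subseteq> ?F ` ?S"
    proof
      fix g' assume g': "g' \<in> {g \<in> Gset \<tau> B (insert q P). \<Phi> g}"
      define g where "g = g'(q := undefined)"
      have gP: "g \<in> PiE P (\<lambda>p. B (\<tau> p))" using g' q unfolding g_def Gset_def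
        by (auto simp: PiE_iff)
      have "g' = g(q := g' q)" unfolding g_def by simp
      hence "\<Phi> g' = \<Phi> g" using inv[OF gP, of "g' q"] by simp
      moreover have "inj_on g P" using g' q unfolding g_def Gset_def
        by (auto simp: inj_on_def)
      moreover have "g' q \<in> B (\<tau> q)" using g' by (auto simp: Gset_def)
      moreover have "g' q \<notin> g ` P" using g' q unfolding g_def Gset_def
        by (auto simp: inj_on_def)
      ultimately have gS: "(g, g' q) \<in> ?S" using g' gP by (auto simp: Gset_def)
      show "g' \<in> ?F ` ?S"
      proof (rule image_eqI[where x="(g, g' q)"])
        show "g' = ?F (g, g' q)" using \<open>g' = g(q := g' q)\<close> by simp
      qed (rule gS)
    qed
  next
    show "?F ` ?S \<subseteq> {g \<in> Gset \<tau> B (insert q P). \<Phi> g}"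
    proof
      fix x assume "x \<in> ?F ` ?S"
      then obtain g h where gh: "g \<in> ?A" "h \<in> B (\<tau> q)" "h \<notin> g ` P" and x: "x = g(q := h)"
        by auto
      have gP: "g \<in> PiE P (\<lambda>p. B (\<tau> p))" "inj_on g P" using gh by (auto simp: Gset_def)
      have "x \<in> PiE (insert q P) (\<lambda>p. B (\<tau> p))" using gP gh q x by (auto simp: PiE_iff)
      moreover have "inj_on x (insert q P)" using gP gh q x
        by (auto simp: inj_on_def)
      moreover have "\<Phi> x" using inv[OF gP(1), of h] gh x by auto
      ultimately show "x \<in> {g \<in> Gset \<tau> B (insert q P). \<Phi> g}" by (auto simp: Gset_def)
    qed
  qed
  have inj: "inj_on ?F ?S"
  proof (rule inj_onI)
    fix x y assume x: "x \<in> ?S" and y: "y \<in> ?S" and e: "?F x = ?F y"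
    obtain g h where [simp]: "x = (g, h)" by (cases x)
    obtain g2 h2 where [simp]: "y = (g2, h2)" by (cases y)
    have "g \<in> PiE P (\<lambda>p. B (\<tau> p))" "g2 \<in> PiE P (\<lambda>p. B (\<tau> p))"
      using x y by (auto simp: Gset_def)
    hence "g q = undefined" "g2 q = undefined" using q by (auto simp: PiE_iff extensional_def)
    moreover have "g(q := h) = g2(q := h2)" using e by simp
    ultimately have "h = h2" "g = g2"
      by (metis fun_upd_same, metis fun_upd_triv fun_upd_upd)
    thus "x = y" by simp
  qed
  have cardS: "\<And>g. g \<in> ?A \<Longrightarrow> card (B (\<tau> q) - g ` P) = card (B (\<tau> q)) - card {p \<in> P. \<tau> p = \<tau> q}"
  proof -
    fix g assume g: "g \<in> ?A"
    have gP: "g \<in> PiE P (\<lambda>p. B (\<tau> p))" "inj_on g P" using g by (auto simp: Gset_def)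
    have "B (\<tau> q) \<inter> g ` P = g ` {p \<in> P. \<tau> p = \<tau> q}"
    proof
      show "B (\<tau> q) \<inter> g ` P \<subseteq> g ` {p \<in> P. \<tau> p = \<tau> q}"
      proof
        fix y assume "y \<in> B (\<tau> q) \<inter> g ` P"
        then obtain p where p: "p \<in> P" "y = g p" "y \<in> B (\<tau> q)" by auto
        have "g p \<in> B (\<tau> p)" using gP p by (auto simp: PiE_iff)
        hence "\<tau> p = \<tau> q" using disj p by blast
        thus "y \<in> g ` {p \<in> P. \<tau> p = \<tau> q}" using p by auto
      qed
    next
      show "g ` {p \<in> P. \<tau> p = \<tau> q} \<subseteq> B (\<tau> q) \<inter> g ` P"
        using gP by (auto simp: PiE_iff)
    qed
    moreover have "card (g ` {p \<in> P. \<tau> p = \<tau> q}) = card {p \<in> P. \<tau> p = \<tau> q}"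
      by (rule card_image) (rule inj_on_subset[OF gP(2)], auto)
    ultimately show "card (B (\<tau> q) - g ` P) = card (B (\<tau> q)) - card {p \<in> P. \<tau> p = \<tau> q}"
      by (metis card_Diff_subset_Int finB finite_Int)
  qed
  have "card {g \<in> Gset \<tau> B (insert q P). \<Phi> g} = card ?S"
    using eq inj by (simp add: card_image)
  also have "\<dots> = (\<Sum>g\<in>?A. card (B (\<tau> q) - g ` P))"
    using finA finB by simp
  also have "\<dots> = (\<Sum>g\<in>?A. card (B (\<tau> q)) - card {p \<in> P. \<tau> p = \<tau> q})"
    using cardS by (rule sum.cong[OF refl])
  also have "\<dots> = card ?A * (card (B (\<tau> q)) - card {p \<in> P. \<tau> p = \<tau> q})" by simp
  finally show ?thesis .
qed


definition mu :: "(nat \<Rightarrow> nat \<times> bool) \<Rightarrow> (nat \<times> bool \<Rightarrow> (nat \<Rightarrow> bool) set) \<Rightarrow> nat set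
   \<Rightarrow> lit set \<Rightarrow> real" where
  "mu \<tau> B P D = real (card {g \<in> Gset \<tau> B P. satg g D}) / real (card (Gset \<tau> B P))"

lemma satg_upd: "a \<notin> pig D \<Longrightarrow> satg (g(a := h)) D = satg g D"
  unfolding satg_def pig_def by force

lemma Gset_empty: "Gset \<tau> B {} = {\<lambda>_. undefined}"
  by (auto simp: Gset_def)

lemma card_Gset_pos:
  assumes "finite P" "card P \<le> s" "\<And>p. p \<in> P \<Longrightarrow> card (B (\<tau> p)) = s"
    and finB: "\<And>t. finite (B t)"
    and disj: "\<And>t t'. t \<noteq> t' \<Longrightarrow> B t \<inter> B t' = {}"
  shows "card (Gset \<tau> B P) > 0"
  using assms(1-3)
proof (induction P rule: finite_induct)
  case empty
  then show ?case by (simp add: Gset_empty)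
next
  case (insert q P)
  have "card {g \<in> Gset \<tau> B (insert q P). True}
     = card {g \<in> Gset \<tau> B P. True} * (card (B (\<tau> q)) - card {p \<in> P. \<tau> p = \<tau> q})"
    by (rule ext_count[OF insert(1,2) finB disj]) auto
  moreover have "card {p \<in> P. \<tau> p = \<tau> q} \<le> card P"
    by (rule card_mono[OF insert(1)]) auto
  moreover have "card P < s" using insert by simp
  moreover have "card (Gset \<tau> B P) > 0" using insert by simp
  ultimately show ?case using insert by simp
qed

lemma mu_mono_aux:
  assumes "finite A" "finite P" "A \<inter> P = {}" "card (P \<union> A) \<le> s"
    "\<And>p. p \<in> P \<union> A \<Longrightarrow> card (B (\<tau> p)) = s" "pig D \<subseteq> P"
    and finB: "\<And>t. finite (B t)"
    and disj: "\<And>t t'. t \<noteq> t' \<Longrightarrow> B t \<inter> B t' = {}"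
  shows "mu \<tau> B (P \<union> A) D = mu \<tau> B P D"
  using assms(1-6)
proof (induction A rule: finite_induct)
  case empty
  then show ?case by simp
next
  case (insert a A)
  have aP: "a \<notin> P \<union> A" using insert by auto
  have finPA: "finite (P \<union> A)" using insert by simp
  have e: "P \<union> insert a A = insert a (P \<union> A)" by simp
  have aD: "a \<notin> pig D" using insert aP by auto
  let ?k = "card (B (\<tau> a)) - card {p \<in> P \<union> A. \<tau> p = \<tau> a}"
  have c1: "card {g \<in> Gset \<tau> B (insert a (P \<union> A)). satg g D}
     = card {g \<in> Gset \<tau> B (P \<union> A). satg g D} * ?k"
    by (rule ext_count[OF finPA aP finB disj]) (simp_all add: satg_upd[OF aD])
  have c2: "card {g \<in> Gset \<tau> B (insert a (P \<union> A)). True}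
     = card {g \<in> Gset \<tau> B (P \<union> A). True} * ?k"
    by (rule ext_count[OF finPA aP finB disj]) simp_all
  have "card {p \<in> P \<union> A. \<tau> p = \<tau> a} \<le> card (P \<union> A)"
    by (rule card_mono[OF finPA]) auto
  moreover have "card (P \<union> A) < s"
  proof -
    have "card (insert a (P \<union> A)) \<le> s" using insert.prems(3) e by simp
    moreover have "card (insert a (P \<union> A)) = Suc (card (P \<union> A))"
      using card_insert_disjoint[OF finPA aP] .
    ultimately show ?thesis by simp
  qed
  moreover have "card (B (\<tau> a)) = s" using insert(7) by simp
  ultimately have kpos: "?k > 0" by linarith
  have IH: "mu \<tau> B (P \<union> A) D = mu \<tau> B P D"
    using insert by (intro insert.IH) (auto simp: e card_insert_if finPA intro: le_trans[OF card_mono])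
  have "mu \<tau> B (insert a (P \<union> A)) D = mu \<tau> B (P \<union> A) D"
    unfolding mu_def using c1 c2 kpos by simp
  thus ?case using IH e by simp
qed

lemma mu_mono:
  assumes "finite P'" "P \<subseteq> P'" "card P' \<le> s"
    "\<And>p. p \<in> P' \<Longrightarrow> card (B (\<tau> p)) = s" "pig D \<subseteq> P"
    and finB: "\<And>t. finite (B t)"
    and disj: "\<And>t t'. t \<noteq> t' \<Longrightarrow> B t \<inter> B t' = {}"
  shows "mu \<tau> B P' D = mu \<tau> B P D"
proof -
  have e: "P \<union> (P' - P) = P'" using assms(2) by auto
  have e2: "P \<union> P' = P'" using assms(2) by auto
  have "mu \<tau> B (P \<union> (P' - P)) D = mu \<tau> B P D"
    by (rule mu_mono_aux[OF _ _ _ _ _ _ finB disj])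
       (use assms finite_subset[OF assms(2) assms(1)] in \<open>auto simp: e e2\<close>)
  thus ?thesis unfolding e .
qed


definition Zf :: "(nat \<Rightarrow> nat \<times> bool) \<Rightarrow> (nat \<times> bool \<Rightarrow> (nat \<Rightarrow> bool) set) \<Rightarrow> nat
   \<Rightarrow> lit set \<Rightarrow> real" where
  "Zf \<tau> B s D = (if card (pig D) \<le> s then mu \<tau> B (pig D) D else 0)"

lemma finite_lits: "finite (lits m r)"
proof -
  have "lits m r = ({..<m} \<times> {..<r}) \<times> UNIV" by (auto simp: lits_def)
  thus ?thesis by simp
qed

lemma pig_lits: "D \<subseteq> lits m r \<Longrightarrow> pig D \<subseteq> {..<m}"
  by (auto simp: pig_def lits_def)

lemma finite_pig: "D \<subseteq> lits m r \<Longrightarrow> finite (pig D)"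
  by (rule finite_subset[OF pig_lits]) auto

lemma pig_insert: "pig (insert l D) = insert (fst (fst l)) (pig D)"
  by (simp add: pig_def)

lemma satg_insert: "satg g (insert l D) \<longleftrightarrow> g (fst (fst l)) (snd (fst l)) = snd l \<and> satg g D"
  by (simp add: satg_def)

lemma mu_nonneg: "mu \<tau> B P D \<ge> 0"
  by (simp add: mu_def)

lemma Zf_nonneg: "Zf \<tau> B s D \<ge> 0"
  by (simp add: Zf_def mu_nonneg)

lemma Zf_empty: "Zf \<tau> B s {} = 1"
proof -
  have "pig {} = {}" by (simp add: pig_def)
  moreover have "{g \<in> Gset \<tau> B {}. satg g {}} = {\<lambda>_. undefined}"
    by (auto simp: Gset_empty satg_def)
  ultimately show ?thesis by (simp add: Zf_def mu_def Gset_empty)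
qed

lemma finite_Gset:
  assumes "finite P" "\<And>t. finite (B t)"
  shows "finite (Gset \<tau> B P)"
proof -
  have "finite (PiE P (\<lambda>p. B (\<tau> p)))" using assms by (intro finite_PiE) auto
  thus ?thesis unfolding Gset_def by (rule finite_subset[rotated]) auto
qed

lemma mu_split:
  assumes "finite P" "\<And>t. finite (B t)"
  shows "mu \<tau> B P (insert ((p,j),True) D) + mu \<tau> B P (insert ((p,j),False) D) = mu \<tau> B P D"
proof -
  let ?G = "Gset \<tau> B P"
  let ?A1 = "{g \<in> ?G. satg g (insert ((p,j),True) D)}"
  let ?A0 = "{g \<in> ?G. satg g (insert ((p,j),False) D)}"
  have fin: "finite ?G" by (rule finite_Gset[OF assms])
  have f1: "finite ?A1" by (rule finite_subset[OF _ fin]) blast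
  have f0: "finite ?A0" by (rule finite_subset[OF _ fin]) blast
  have e: "{g \<in> ?G. satg g D} = ?A1 \<union> ?A0"
    unfolding satg_insert by auto
  have d: "?A1 \<inter> ?A0 = {}" unfolding satg_insert by auto
  have "card {g \<in> ?G. satg g D} = card ?A1 + card ?A0"
    unfolding e by (rule card_Un_disjoint[OF f1 f0 d])
  thus ?thesis unfolding mu_def by (simp add: add_divide_distrib)
qed

lemma mu_le:
  assumes "finite P" "\<And>t. finite (B t)"
  shows "mu \<tau> B P (insert l D) \<le> mu \<tau> B P D"
proof -
  let ?G = "Gset \<tau> B P"
  have fin: "finite ?G" by (rule finite_Gset[OF assms])
  have f: "finite {g \<in> ?G. satg g D}" by (rule finite_subset[OF _ fin]) blast
  have "{g \<in> ?G. satg g (insert l D)} \<subseteq> {g \<in> ?G. satg g D}"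
    unfolding satg_insert by blast
  hence "card {g \<in> ?G. satg g (insert l D)} \<le> card {g \<in> ?G. satg g D}"
    by (rule card_mono[OF f])
  thus ?thesis unfolding mu_def by (simp add: divide_right_mono)
qed

lemma mu_clause:
  assumes "finite P" "\<And>t. finite (B t)" "finite C"
    and cov: "\<And>g. g \<in> Gset \<tau> B P \<Longrightarrow> satg g D \<Longrightarrow> \<exists>l\<in>C. satg g (insert l D)"
  shows "mu \<tau> B P D \<le> (\<Sum>l\<in>C. mu \<tau> B P (insert l D))"
proof -
  let ?G = "Gset \<tau> B P"
  have fin: "finite ?G" by (rule finite_Gset[OF assms(1,2)])
  have sub: "{g \<in> ?G. satg g D} \<subseteq> (\<Union>l\<in>C. {g \<in> ?G. satg g (insert l D)})"
  proof
    fix g assume g: "g \<in> {g \<in> ?G. satg g D}"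
    then obtain l where "l \<in> C" "satg g (insert l D)" using cov by blast
    thus "g \<in> (\<Union>l\<in>C. {g \<in> ?G. satg g (insert l D)})" using g by blast
  qed
  have fU: "finite (\<Union>l\<in>C. {g \<in> ?G. satg g (insert l D)})"
    by (rule finite_UN_I[OF assms(3)]) (rule finite_subset[OF _ fin], blast)
  have "card {g \<in> ?G. satg g D} \<le> card (\<Union>l\<in>C. {g \<in> ?G. satg g (insert l D)})"
    by (rule card_mono[OF fU sub])
  also have "\<dots> \<le> (\<Sum>l\<in>C. card {g \<in> ?G. satg g (insert l D)})"
    by (rule card_UN_le[OF assms(3)])
  finally have N: "card {g \<in> ?G. satg g D} \<le> (\<Sum>l\<in>C. card {g \<in> ?G. satg g (insert l D)})" .
  have "real (card {g \<in> ?G. satg g D}) \<le> real (\<Sum>l\<in>C. card {g \<in> ?G. satg g (insert l D)})"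
    using N by (rule of_nat_mono)
  also have "\<dots> = (\<Sum>l\<in>C. real (card {g \<in> ?G. satg g (insert l D)}))"
    by (rule of_nat_sum)
  finally have R: "real (card {g \<in> ?G. satg g D}) \<le> (\<Sum>l\<in>C. real (card {g \<in> ?G. satg g (insert l D)}))" .
  have "real (card {g \<in> ?G. satg g D}) / real (card ?G) \<le> (\<Sum>l\<in>C. real (card {g \<in> ?G. satg g (insert l D)})) / real (card ?G)"
    using R by (rule divide_right_mono) simp
  thus ?thesis unfolding mu_def sum_divide_distrib .
qed

lemma killed_zero:
  assumes "((p,j),c) \<in> X" "\<tau> p = (j, \<not> c)"
    and inH: "\<And>t a. a \<in> B t \<Longrightarrow> a \<in> PiE {..<r} (\<lambda>_. UNIV) \<and> a (fst t) = snd t"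
  shows "Zf \<tau> B s X = 0"
proof -
  have e: "{g \<in> Gset \<tau> B (pig X). satg g X} = {}"
  proof (rule ccontr)
    assume "{g \<in> Gset \<tau> B (pig X). satg g X} \<noteq> {}"
    then obtain g where g: "g \<in> Gset \<tau> B (pig X)" "satg g X" by auto
    have "p \<in> pig X" using assms(1) by (force simp: pig_def)
    hence "g p \<in> B (\<tau> p)" using g by (auto simp: Gset_def PiE_iff)
    hence "g p j = (\<not> c)" using inH assms(2) by fastforce
    moreover have "g p j = c" using g(2) assms(1) by (force simp: satg_def)
    ultimately show False by simp
  qed
  show ?thesis unfolding Zf_def mu_def e by simp
qed

lemma Z_at:
  assumes "P' \<subseteq> {..<m}" "card P' \<le> s"
    and finB: "\<And>t. finite (B t)"
    and disj: "\<And>t t'. t \<noteq> t' \<Longrightarrow> B t \<inter> B t' = {}"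
    and cardB: "\<And>p. p < m \<Longrightarrow> card (B (\<tau> p)) = s"
    and pD: "pig D \<subseteq> P'"
  shows "Zf \<tau> B s D = mu \<tau> B P' D"
proof -
  have fin: "finite P'" by (rule finite_subset[OF assms(1)]) simp
  have "card (pig D) \<le> card P'" by (rule card_mono[OF fin pD])
  hence "card (pig D) \<le> s" using assms(2) by simp
  moreover have "mu \<tau> B P' D = mu \<tau> B (pig D) D"
    by (rule mu_mono[OF fin pD assms(2) _ _ finB disj]) (use cardB assms(1) in auto)
  ultimately show ?thesis by (simp add: Zf_def)
qed

lemma card_ins_le: "finite A \<Longrightarrow> card (insert x A) \<le> Suc (card A)"
  by (simp add: card_insert_if)

lemma construct_sat:
  assumes valid: "\<forall>c\<in>S. sa_valid m r c"
    and finB: "\<And>t. finite (B t)"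
    and disj: "\<And>t t'. t \<noteq> t' \<Longrightarrow> B t \<inter> B t' = {}"
    and cardB: "\<And>p. p < m \<Longrightarrow> card (B (\<tau> p)) = s"
    and inH: "\<And>t a. a \<in> B t \<Longrightarrow> a \<in> PiE {..<r} (\<lambda>_. UNIV) \<and> a (fst t) = snd t"
    and killed: "\<And>D. D \<in> (\<Union>c\<in>S. sa_terms c) \<Longrightarrow> s < card (pig D) + 2 \<Longrightarrow>
                   \<exists>p j c. ((p,j),c) \<in> D \<and> \<tau> p = (j, \<not> c)"
  shows "\<forall>c\<in>S. sa_sat (Zf \<tau> B s) c"
proof
  fix c assume cS: "c \<in> S"
  let ?Z = "Zf \<tau> B s"
  have vc: "sa_valid m r c" using valid cS by blast
  have zero: "\<And>X D. D \<subseteq> X \<Longrightarrow> D \<in> (\<Union>c\<in>S. sa_terms c) \<Longrightarrow> s < card (pig D) + 2 \<Longrightarrow> ?Z X = 0"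
  proof -
    fix X D assume "D \<subseteq> X" "D \<in> (\<Union>c\<in>S. sa_terms c)" "s < card (pig D) + 2"
    then obtain p j c where "((p,j),c) \<in> D" "\<tau> p = (j, \<not> c)" using killed by blast
    thus "?Z X = 0" using killed_zero[OF _ _ inH] \<open>D \<subseteq> X\<close> by blast
  qed
  show "sa_sat ?Z c"
  proof (cases c)
    case (ClauseLift C D)
    have val: "bphp_clause m r C" "D \<subseteq> lits m r" using vc ClauseLift by auto
    have DT: "D \<in> (\<Union>c\<in>S. sa_terms c)" using cS ClauseLift by force
    obtain a i i' where ai: "i < m" "i' < m" "i \<noteq> i'"
      and C: "C = {((i, j), \<not> a j) | j. j < r} \<union> {((i', j), \<not> a j) | j. j < r}"
      using val(1) unfolding bphp_clause_def by blast
    have finC: "finite C" unfolding C by simp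
    show ?thesis
    proof (cases "card (pig D) + 2 \<le> s")
      case True
      let ?P = "insert i (insert i' (pig D))"
      have Psub: "?P \<subseteq> {..<m}" using pig_lits[OF val(2)] ai by auto
      have "card ?P \<le> card (pig D) + 2"
        using card_ins_le[OF finite_pig[OF val(2)], of i'] card_ins_le[OF finite_insert[THEN iffD2, OF finite_pig[OF val(2)]], of i i']
        by simp
      hence cP: "card ?P \<le> s" using True by simp
      have finP: "finite ?P" by (rule finite_subset[OF Psub]) simp
      have ZD: "?Z D = mu \<tau> B ?P D"
        by (rule Z_at[where B=B and \<tau>=\<tau> and m=m and s=s, OF Psub cP finB disj cardB]) auto
      have Zl: "?Z (insert l D) = mu \<tau> B ?P (insert l D)" if "l \<in> C" for l
      proof -
        have "fst (fst l) \<in> {i, i'}" using that C by auto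
        hence pz: "pig (insert l D) \<subseteq> ?P" by (auto simp: pig_insert)
        show ?thesis by (rule Z_at[where B=B and \<tau>=\<tau> and m=m and s=s, OF Psub cP finB disj cardB]) (simp_all add: pz)
      qed
      have cov: "\<exists>l\<in>C. satg g (insert l D)" if g: "g \<in> Gset \<tau> B ?P" "satg g D" for g
      proof -
        have gP: "g \<in> PiE ?P (\<lambda>p. B (\<tau> p))" "inj_on g ?P" using g by (auto simp: Gset_def)
        have ne: "g i \<noteq> g i'" using gP(2) ai(3) by (auto simp: inj_on_def)
        have gi: "g i \<in> B (\<tau> i)" "g i' \<in> B (\<tau> i')" using gP(1) by (auto simp: PiE_iff)
        have Hi: "g i \<in> PiE {..<r} (\<lambda>_. UNIV)" "g i' \<in> PiE {..<r} (\<lambda>_. UNIV)"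
          using inH[OF gi(1)] inH[OF gi(2)] by auto
        obtain j where j: "j < r" "g i j \<noteq> g i' j"
          using PiE_ext[OF Hi] ne by auto
        show ?thesis
        proof (cases "g i j = a j")
          case True
          hence "g i' j = (\<not> a j)" using j by auto
          moreover have "((i', j), \<not> a j) \<in> C" using C j by auto
          ultimately show ?thesis using g(2) by (force simp: satg_insert)
        next
          case False
          hence "g i j = (\<not> a j)" by auto
          moreover have "((i, j), \<not> a j) \<in> C" using C j by auto
          ultimately show ?thesis using g(2) by (force simp: satg_insert)
        qed
      qed
      have "?Z D \<le> (\<Sum>l\<in>C. mu \<tau> B ?P (insert l D))"
        unfolding ZD by (rule mu_clause[OF finP finB finC cov])
      also have "\<dots> = (\<Sum>l\<in>C. ?Z (insert l D))"
        by (rule sum.cong[OF refl]) (simp add: Zl)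
      finally show ?thesis using ClauseLift by simp
    next
      case False
      hence "?Z D = 0" using zero[OF _ DT] by simp
      moreover have "(\<Sum>l\<in>C. ?Z (insert l D)) \<ge> 0" by (rule sum_nonneg) (rule Zf_nonneg)
      ultimately show ?thesis using ClauseLift by simp
    qed
  next
    case (NegLift v D)
    obtain p j where v: "v = (p, j)" by (cases v)
    have val: "p < m" "j < r" "D \<subseteq> lits m r" using vc NegLift v by auto
    have DT: "D \<in> (\<Union>c\<in>S. sa_terms c)" using cS NegLift by force
    show ?thesis
    proof (cases "card (pig D) + 2 \<le> s")
      case True
      let ?P = "insert p (pig D)"
      have Psub: "?P \<subseteq> {..<m}" using pig_lits[OF val(3)] val by auto
      have "card ?P \<le> Suc (card (pig D))" by (rule card_ins_le[OF finite_pig[OF val(3)]])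
      hence cP: "card ?P \<le> s" using True by simp
      have finP: "finite ?P" by (rule finite_subset[OF Psub]) simp
      have ZD: "?Z D = mu \<tau> B ?P D"
        by (rule Z_at[where B=B and \<tau>=\<tau> and m=m and s=s, OF Psub cP finB disj cardB]) auto
      have Zb: "?Z (insert ((p,j),b) D) = mu \<tau> B ?P (insert ((p,j),b) D)" for b
        by (rule Z_at[where B=B and \<tau>=\<tau> and m=m and s=s, OF Psub cP finB disj cardB]) (auto simp: pig_insert)
      show ?thesis using NegLift v ZD Zb mu_split[OF finP finB] by simp
    next
      case False
      hence "?Z D = 0" "?Z (insert (v,True) D) = 0" "?Z (insert (v,False) D) = 0"
        using zero[OF _ DT] by auto
      thus ?thesis using NegLift by simp
    qed
  next
    case (BoundLift l D)
    obtain p j b where l: "l = ((p, j), b)" by (metis prod.collapse)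
    have val: "p < m" "D \<subseteq> lits m r" using vc BoundLift l by (auto simp: lits_def)
    have DT: "D \<in> (\<Union>c\<in>S. sa_terms c)" using cS BoundLift by force
    show ?thesis
    proof (cases "card (pig D) + 2 \<le> s")
      case True
      let ?P = "insert p (pig D)"
      have Psub: "?P \<subseteq> {..<m}" using pig_lits[OF val(2)] val by auto
      have "card ?P \<le> Suc (card (pig D))" by (rule card_ins_le[OF finite_pig[OF val(2)]])
      hence cP: "card ?P \<le> s" using True by simp
      have finP: "finite ?P" by (rule finite_subset[OF Psub]) simp
      have ZD: "?Z D = mu \<tau> B ?P D"
        by (rule Z_at[where B=B and \<tau>=\<tau> and m=m and s=s, OF Psub cP finB disj cardB]) auto
      have Zl: "?Z (insert l D) = mu \<tau> B ?P (insert l D)"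
        by (rule Z_at[where B=B and \<tau>=\<tau> and m=m and s=s, OF Psub cP finB disj cardB]) (auto simp: pig_insert l)
      show ?thesis using BoundLift ZD Zl mu_le[OF finP finB] mu_nonneg by simp
    next
      case False
      hence "?Z D = 0" "?Z (insert l D) = 0"
        using zero[OF _ DT] by auto
      thus ?thesis using BoundLift by simp
    qed
  qed
qed



lemma greedy:
  assumes "finite I" "\<And>i. i \<in> I \<Longrightarrow> finite (X i) \<and> N \<le> card (X i)" "card I * s \<le> N"
  shows "\<exists>B. (\<forall>i\<in>I. B i \<subseteq> X i \<and> card (B i) = s \<and> finite (B i))
           \<and> (\<forall>i j. i \<noteq> j \<longrightarrow> B i \<inter> B j = {}) \<and> (\<forall>i. i \<notin> I \<longrightarrow> B i = {})"
  using assms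
proof (induction I rule: finite_induct)
  case empty
  show ?case by (rule exI[of _ "\<lambda>_. {}"]) simp
next
  case (insert x F)
  have ci: "card (insert x F) = card F + 1" using insert(1,2) by simp
  have "card F * s \<le> (card F + 1) * s" by simp
  hence "card F * s \<le> N" using insert(5) unfolding ci by (rule le_trans)
  then obtain B where B: "\<forall>i\<in>F. B i \<subseteq> X i \<and> card (B i) = s \<and> finite (B i)"
      "\<forall>i j. i \<noteq> j \<longrightarrow> B i \<inter> B j = {}" "\<forall>i. i \<notin> F \<longrightarrow> B i = {}"
    using insert by blast
  let ?U = "\<Union>i\<in>F. B i"
  have "card ?U \<le> (\<Sum>i\<in>F. card (B i))" by (rule card_UN_le[OF insert(1)])
  also have "\<dots> = card F * s" using B(1) by simp
  finally have cU: "card ?U \<le> card F * s" .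
  have fx: "finite (X x)" "N \<le> card (X x)" using insert(4) by auto
  have "card (X x) - card ?U \<le> card (X x - ?U)" by (rule diff_card_le_card_Diff) (use insert(1) B(1) in auto)
  moreover have "(card F + 1) * s \<le> N" using insert(5) ci by simp
  ultimately have "s \<le> card (X x - ?U)" using cU fx by (simp add: algebra_simps)
  then obtain Bx where Bx: "Bx \<subseteq> X x - ?U" "card Bx = s" "finite Bx"
    by (rule obtain_subset_with_card_n)
  show ?case
  proof (rule exI[of _ "B(x := Bx)"], intro conjI)
    show "\<forall>i\<in>insert x F. (B(x := Bx)) i \<subseteq> X i \<and> card ((B(x := Bx)) i) = s \<and> finite ((B(x := Bx)) i)"
      using B(1) Bx by auto
  next
    show "\<forall>i j. i \<noteq> j \<longrightarrow> (B(x := Bx)) i \<inter> (B(x := Bx)) j = {}"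
    proof (intro allI impI)
      fix i j :: 'a assume ij: "i \<noteq> j"
      have dx: "Bx \<inter> B k = {}" if "k \<noteq> x" for k
      proof (cases "k \<in> F")
        case True
        hence "B k \<subseteq> ?U" by blast
        thus ?thesis using Bx(1) by blast
      next
        case False
        hence "B k = {}" using B(3) that by blast
        thus ?thesis by simp
      qed
      show "(B(x := Bx)) i \<inter> (B(x := Bx)) j = {}"
      proof (cases "i = x")
        case True
        thus ?thesis using ij dx[of j] by simp
      next
        case False
        note ix = this
        show ?thesis
        proof (cases "j = x")
          case True
          thus ?thesis using ix dx[of i] by (simp add: Int_commute)
        next
          case False
          thus ?thesis using ix ij B(2) by simp
        qed
      qed
    qed
  next
    show "\<forall>i. i \<notin> insert x F \<longrightarrow> (B(x := Bx)) i = {}" using B(3) by auto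
  qed
qed

lemma halfcube_card:
  assumes "j < r"
  shows "card {a \<in> PiE {..<r} (\<lambda>_. UNIV :: bool set). a j = b} = 2 ^ (r - 1)"
proof -
  have e: "{a \<in> PiE {..<r} (\<lambda>_. UNIV :: bool set). a j = b}
           = PiE {..<r} (\<lambda>i. if i = j then {b} else UNIV)"
  proof (intro equalityI subsetI)
    fix a assume "a \<in> {a \<in> PiE {..<r} (\<lambda>_. UNIV :: bool set). a j = b}"
    thus "a \<in> PiE {..<r} (\<lambda>i. if i = j then {b} else UNIV)" by (simp add: PiE_iff)
  next
    fix a assume a: "a \<in> PiE {..<r} (\<lambda>i. if i = j then {b} else (UNIV :: bool set))"
    hence "a j \<in> {b}" using assms by (auto simp: PiE_iff dest: bspec[of _ _ j])
    thus "a \<in> {a \<in> PiE {..<r} (\<lambda>_. UNIV :: bool set). a j = b}" using a by (simp add: PiE_iff)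
  qed
  have "card (PiE {..<r} (\<lambda>i. if i = j then {b} else (UNIV :: bool set)))
        = (\<Prod>i\<in>{..<r}. card (if i = j then {b} else (UNIV :: bool set)))"
    by (rule card_PiE) simp
  also have "\<dots> = (\<Prod>i\<in>{..<r}. (if i = j then 1 else 2))"
    by (rule prod.cong) auto
  also have "\<dots> = (\<Prod>i\<in>{..<r} - {j}. (if i = j then 1 else 2::nat))"
    using prod.remove[of "{..<r}" j "\<lambda>i. if i = j then 1 else 2::nat"] assms by simp
  also have "\<dots> = (\<Prod>i\<in>{..<r} - {j}. 2::nat)"
    by (rule prod.cong) auto
  also have "\<dots> = 2 ^ (r - 1)" using assms by simp
  finally show ?thesis using e by simp
qed


lemma prod_if_pow:
  assumes "finite A"
  shows "(\<Prod>p\<in>A. if p \<in> P then x else y) = x ^ card (A \<inter> P) * (y::real) ^ card (A - P)"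
proof -
  have "(\<Prod>p\<in>A. if p \<in> P then x else y) = (\<Prod>p\<in>A \<inter> {p. p \<in> P}. x) * (\<Prod>p\<in>A \<inter> - {p. p \<in> P}. y)"
    by (rule prod.If_cases[OF assms])
  also have "A \<inter> {p. p \<in> P} = A \<inter> P" by auto
  also have "A \<inter> - {p. p \<in> P} = A - P" by auto
  finally show ?thesis by simp
qed

lemma exists_tau:
  assumes r: "r \<ge> 1" and finW: "finite W"
    and W: "\<And>D. D \<in> W \<Longrightarrow> D \<subseteq> lits m r \<and> k \<le> card (pig D)"
    and small: "real (card W) * (1 - 1 / (2 * real r)) ^ k < 1"
  shows "\<exists>\<tau> \<in> PiE {..<m} (\<lambda>_. {..<r} \<times> (UNIV::bool set)).
           \<forall>D\<in>W. \<exists>p j c. ((p,j),c) \<in> D \<and> \<tau> p = (j, \<not> c)"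
proof -
  define TY where "TY = {..<r} \<times> (UNIV::bool set)"
  define \<Omega> where "\<Omega> = PiE {..<m} (\<lambda>_. TY)"
  define q where "q = 1 - 1 / (2 * real r)"
  define lt where "lt D p = (SOME l. l \<in> D \<and> fst (fst l) = p)" for D :: "lit set" and p
  define bad where "bad D p = (snd (fst (lt D p)), \<not> snd (lt D p))" for D p
  define Surv where "Surv D = PiE {..<m} (\<lambda>p. if p \<in> pig D then TY - {bad D p} else TY)" for D
  have cTY: "card TY = 2 * r" by (simp add: TY_def)
  have finTY: "finite TY" by (simp add: TY_def)
  have cO: "card \<Omega> = (2 * r) ^ m" by (simp add: \<Omega>_def card_PiE cTY)
  have lt: "lt D p \<in> D \<and> fst (fst (lt D p)) = p" if "p \<in> pig D" for D p
  proof -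
    from that obtain l where "l \<in> D" "fst (fst l) = p" by (auto simp: pig_def)
    hence "l \<in> D \<and> fst (fst l) = p" by simp
    thus ?thesis unfolding lt_def by (rule someI)
  qed
  have qpos: "0 \<le> q" "q \<le> 1" using r by (auto simp: q_def field_simps)
  have cSurv: "real (card (Surv D)) \<le> real (2 * r) ^ m * q ^ k" if "D \<in> W" for D
  proof -
    have DL: "D \<subseteq> lits m r" "k \<le> card (pig D)" using W[OF that] by auto
    have badTY: "bad D p \<in> TY" if "p \<in> pig D" for p
    proof -
      have "lt D p \<in> lits m r" using lt[OF that] DL by auto
      thus ?thesis by (auto simp: bad_def TY_def lits_def)
    qed
    have "card (Surv D) = (\<Prod>p\<in>{..<m}. card (if p \<in> pig D then TY - {bad D p} else TY))"
      unfolding Surv_def by (rule card_PiE) simp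
    also have "\<dots> = (\<Prod>p\<in>{..<m}. if p \<in> pig D then 2 * r - 1 else 2 * r)"
      by (rule prod.cong) (auto simp: badTY finTY cTY)
    finally have "real (card (Surv D)) = (\<Prod>p\<in>{..<m}. if p \<in> pig D then real (2 * r - 1) else real (2 * r))"
      by (simp add: of_nat_prod if_distrib)
    also have "\<dots> = real (2 * r - 1) ^ card ({..<m} \<inter> pig D) * real (2 * r) ^ card ({..<m} - pig D)"
      by (rule prod_if_pow) simp
    also have "{..<m} \<inter> pig D = pig D" using pig_lits[OF DL(1)] by auto
    also have "real (2 * r - 1) = real (2 * r) * q" using r by (simp add: q_def field_simps of_nat_diff)
    finally have e: "real (card (Surv D)) = real (2 * r) ^ card (pig D) * q ^ card (pig D) * real (2 * r) ^ card ({..<m} - pig D)"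
      by (simp add: power_mult_distrib)
    have sub: "pig D \<subseteq> {..<m}" by (rule pig_lits[OF DL(1)])
    have fpd: "finite (pig D)" by (rule finite_subset[OF sub]) simp
    have cd: "card ({..<m} - pig D) = m - card (pig D)"
      using card_Diff_subset[OF fpd sub] by simp
    have cm: "card (pig D) \<le> m" using card_mono[OF _ sub] by simp
    have "card (pig D) + card ({..<m} - pig D) = m" using cd cm by simp
    hence pw: "real (2 * r) ^ card (pig D) * real (2 * r) ^ card ({..<m} - pig D) = real (2 * r) ^ m"
      by (metis power_add)
    have qq: "q ^ card (pig D) \<le> q ^ k" by (rule power_decreasing[OF DL(2) qpos])
    have nn: "0 \<le> real (2 * r) ^ card (pig D) * real (2 * r) ^ card ({..<m} - pig D)" by simp
    have "real (card (Surv D)) = (real (2 * r) ^ card (pig D) * real (2 * r) ^ card ({..<m} - pig D)) * q ^ card (pig D)"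
      unfolding e by (simp only: mult_ac)
    also have "\<dots> \<le> (real (2 * r) ^ card (pig D) * real (2 * r) ^ card ({..<m} - pig D)) * q ^ k"
      by (rule mult_left_mono[OF qq nn])
    finally show ?thesis unfolding pw .
  qed
  have "\<not> \<Omega> \<subseteq> (\<Union>D\<in>W. Surv D)"
  proof
    assume sub: "\<Omega> \<subseteq> (\<Union>D\<in>W. Surv D)"
    have "card \<Omega> \<le> card (\<Union>D\<in>W. Surv D)"
      by (rule card_mono[OF _ sub]) (simp add: finW Surv_def finite_PiE finTY)
    also have "\<dots> \<le> (\<Sum>D\<in>W. card (Surv D))" by (rule card_UN_le[OF finW])
    finally have "real (card \<Omega>) \<le> (\<Sum>D\<in>W. real (card (Surv D)))"
      by (metis of_nat_le_iff of_nat_sum)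
    also have "\<dots> \<le> (\<Sum>D\<in>W. real (2 * r) ^ m * q ^ k)" by (rule sum_mono) (rule cSurv)
    also have "\<dots> = real (card W) * q ^ k * real (2 * r) ^ m" by simp
    also have "\<dots> < 1 * real (2 * r) ^ m"
      using small r by (intro mult_strict_right_mono) (auto simp: q_def)
    finally show False using cO by simp
  qed
  then obtain \<tau> where \<tau>: "\<tau> \<in> \<Omega>" "\<And>D. D \<in> W \<Longrightarrow> \<tau> \<notin> Surv D" by blast
  show ?thesis
  proof (rule bexI[of _ \<tau>])
    show "\<tau> \<in> PiE {..<m} (\<lambda>_. {..<r} \<times> (UNIV::bool set))" using \<tau>(1) by (simp add: \<Omega>_def TY_def)
    show "\<forall>D\<in>W. \<exists>p j c. ((p,j),c) \<in> D \<and> \<tau> p = (j, \<not> c)"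
    proof
      fix D assume D: "D \<in> W"
      have "\<tau> \<notin> Surv D" using \<tau>(2) D by blast
      then obtain p where p: "p < m" "\<tau> p \<notin> (if p \<in> pig D then TY - {bad D p} else TY)"
        using \<tau>(1) by (auto simp: Surv_def \<Omega>_def PiE_iff)
      have pD: "p \<in> pig D" and tb: "\<tau> p = bad D p"
        using p \<tau>(1) by (auto simp: \<Omega>_def PiE_iff split: if_splits)
      obtain pp j c where l: "lt D p = ((pp, j), c)" by (metis prod.collapse)
      have "((p, j), c) \<in> D" using lt[OF pD] l by auto
      moreover have "\<tau> p = (j, \<not> c)" using tb l by (simp add: bad_def)
      ultimately show "\<exists>p j c. ((p,j),c) \<in> D \<and> \<tau> p = (j, \<not> c)" by blast
    qed
  qed
qed



lemma terms_sub:
  assumes "sa_valid m r c"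
  shows "sa_terms c \<subseteq> Pow (lits m r)"
proof (cases c)
  case (ClauseLift C D)
  have "bphp_clause m r C" "D \<subseteq> lits m r" using assms ClauseLift by auto
  moreover from this(1) have "C \<subseteq> lits m r" unfolding bphp_clause_def lits_def by blast
  ultimately show ?thesis using ClauseLift by auto
next
  case (NegLift v D)
  thus ?thesis using assms by (cases v) (auto simp: lits_def)
next
  case (BoundLift l D)
  thus ?thesis using assms by auto
qed

lemma finite_T:
  assumes "\<forall>c\<in>S. sa_valid m r c"
  shows "finite (\<Union>c\<in>S. sa_terms c)"
proof (rule finite_subset)
  show "(\<Union>c\<in>S. sa_terms c) \<subseteq> Pow (lits m r)" using terms_sub assms by blast
  show "finite (Pow (lits m r))" using finite_lits by simp
qed

lemma D_in_terms: "\<exists>D. D \<in> sa_terms c"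
  by (cases c) auto

lemma one_term:
  assumes "sa_refutation m r S"
  shows "1 \<le> sa_num_terms S"
proof -
  have v: "\<forall>c\<in>S. sa_valid m r c" using assms by (simp add: sa_refutation_def)
  have "S \<noteq> {}"
  proof
    assume "S = {}"
    hence "\<exists>Z. Z {} = 1 \<and> (\<forall>c\<in>S. sa_sat Z c)" by (intro exI[of _ "\<lambda>_. 1"]) simp
    thus False using assms by (simp add: sa_refutation_def)
  qed
  then obtain c where "c \<in> S" by blast
  moreover obtain D where "D \<in> sa_terms c" using D_in_terms by blast
  ultimately have "(\<Union>c\<in>S. sa_terms c) \<noteq> {}" by blast
  hence "card (\<Union>c\<in>S. sa_terms c) \<noteq> 0" using finite_T[OF v] by simp
  thus ?thesis by (simp add: sa_num_terms_def)
qed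

lemma nonempty_term:
  assumes "r \<ge> 1" "sa_valid m r c"
  shows "\<exists>X\<in>sa_terms c. X \<noteq> {}"
proof (cases c)
  case (ClauseLift C D)
  obtain a i i' where C: "C = {((i, j), \<not> a j) | j. j < r} \<union> {((i', j), \<not> a j) | j. j < r}"
  proof -
    have "bphp_clause m r C" using assms(2) ClauseLift by simp
    thus ?thesis using that unfolding bphp_clause_def by blast
  qed
  have "((i, 0), \<not> a 0) \<in> C" using C assms(1) by auto
  thus ?thesis using ClauseLift by auto
qed auto

lemma two_terms:
  assumes "r \<ge> 1" "sa_refutation m r S"
  shows "2 \<le> sa_num_terms S"
proof (rule ccontr)
  let ?T = "\<Union>c\<in>S. sa_terms c"
  assume "\<not> 2 \<le> sa_num_terms S"
  hence c1: "card ?T \<le> 1" by (simp add: sa_num_terms_def)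
  have v: "\<forall>c\<in>S. sa_valid m r c" using assms by (simp add: sa_refutation_def)
  have fin: "finite ?T" by (rule finite_T[OF v])
  have same: "X = Y" if "X \<in> ?T" "Y \<in> ?T" for X Y
  proof (rule ccontr)
    assume "X \<noteq> Y"
    hence "card {X, Y} = 2" by simp
    moreover have "card {X, Y} \<le> card ?T" by (rule card_mono[OF fin]) (use that in auto)
    ultimately show False using c1 by simp
  qed
  define Z where "Z = (\<lambda>X::lit set. if X = {} then (1::real) else 0)"
  have "\<forall>c\<in>S. sa_sat Z c"
  proof
    fix c assume cS: "c \<in> S"
    obtain X0 where X0: "X0 \<in> sa_terms c" "X0 \<noteq> {}" using nonempty_term[OF assms(1)] v cS by blast
    have z: "Z X = 0" if "X \<in> sa_terms c" for X
    proof -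
      have "X = X0" using same[of X X0] that X0 cS by blast
      thus ?thesis using X0 by (simp add: Z_def)
    qed
    show "sa_sat Z c"
    proof (cases c)
      case (ClauseLift C D)
      have "Z D = 0" using z ClauseLift by simp
      moreover have "(\<Sum>l\<in>C. Z (insert l D)) = 0"
        by (rule sum.neutral) (use z ClauseLift in auto)
      ultimately show ?thesis using ClauseLift by simp
    next
      case (NegLift v D)
      thus ?thesis using z by simp
    next
      case (BoundLift l D)
      thus ?thesis using z by simp
    qed
  qed
  moreover have "Z {} = 1" by (simp add: Z_def)
  ultimately show False using assms(2) by (auto simp: sa_refutation_def)
qed

lemma exp_half: "exp (1/2::real) \<le> 2"
proof -
  have "exp (1/2::real) ^ 2 = exp (of_nat 2 * (1/2))" by (rule exp_of_nat_mult[symmetric])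
  also have "\<dots> = exp 1" by simp
  also have "\<dots> \<le> 2 ^ 2" using exp_le by simp
  finally show ?thesis by (rule power2_le_imp_le) simp
qed

lemma pow_ge_11: "r \<ge> 7 \<Longrightarrow> 11 * r \<le> (2::nat) ^ r"
proof (induction r rule: dec_induct)
  case base
  then show ?case by simp
next
  case (step k)
  then show ?case by simp
qed



lemma big_case:
  assumes r7: "r \<ge> 7" and ref: "sa_refutation m r S"
  shows "exp (real (2^r) / (32 * (real r)\<^sup>2)) \<le> real (sa_num_terms S)"
proof (rule ccontr)
  define T where "T = (\<Union>c\<in>S. sa_terms c)"
  define x where "x = real (2^r) / (32 * (real r)\<^sup>2)"
  assume "\<not> exp (real (2^r) / (32 * (real r)\<^sup>2)) \<le> real (sa_num_terms S)"
  hence lt: "real (card T) < exp x" by (simp add: x_def T_def sa_num_terms_def)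
  have v: "\<forall>c\<in>S. sa_valid m r c" using ref by (simp add: sa_refutation_def)
  have finT: "finite T" unfolding T_def by (rule finite_T[OF v])
  have Tsub: "T \<subseteq> Pow (lits m r)" unfolding T_def using terms_sub v by blast
  have r1: "r \<ge> 1" using r7 by simp
  have p11: "11 * r \<le> 2 ^ r" by (rule pow_ge_11[OF r7])
  define s where "s = 2 ^ r div (4 * r)"
  have r4: "4 * r > 0" using r1 by simp
  have s2: "2 \<le> s" unfolding s_def using p11
    by (subst less_eq_div_iff_mult_less_eq[OF r4]) simp
  have sdiv: "s * (4 * r) \<le> 2 ^ r" unfolding s_def by simp
  have slt: "2 ^ r < (s + 1) * (4 * r)"
  proof -
    have "2 ^ r = s * (4 * r) + 2 ^ r mod (4 * r)" unfolding s_def by (rule div_mult_mod_eq[symmetric])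
    moreover have "2 ^ r mod (4 * r) < 4 * r" using r4 by simp
    ultimately show ?thesis by (simp add: algebra_simps)
  qed
  define k where "k = s - 1"
  have key: "2 ^ r \<le> 16 * r * k"
  proof -
    have a: "2 ^ r < 4 * (r * s) + 4 * r" using slt by (simp add: algebra_simps)
    have b: "16 * r * k = 16 * (r * s) - 16 * r" unfolding k_def by (simp add: algebra_simps diff_mult_distrib2)
    have c: "r * s \<ge> r * 2" using s2 by simp
    show ?thesis using a b c p11 by linarith
  qed
  define TY where "TY = {..<r} \<times> (UNIV :: bool set)"
  define X where "X t = {a \<in> PiE {..<r} (\<lambda>_. UNIV :: bool set). a (fst t) = snd t}" for t :: "nat \<times> bool"
  have cTY: "card TY = 2 * r" by (simp add: TY_def)
  have Xc: "finite (X t) \<and> 2 ^ (r - 1) \<le> card (X t)" if "t \<in> TY" for t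
  proof
    have "X t \<subseteq> PiE {..<r} (\<lambda>_. UNIV :: bool set)" unfolding X_def by blast
    moreover have "finite (PiE {..<r} (\<lambda>_. UNIV :: bool set))" by (rule finite_PiE) simp_all
    ultimately show "finite (X t)" by (rule finite_subset)
    have "fst t < r" using that by (auto simp: TY_def)
    hence "card (X t) = 2 ^ (r - 1)" unfolding X_def by (rule halfcube_card)
    thus "2 ^ (r - 1) \<le> card (X t)" by simp
  qed
  have cN: "card TY * s \<le> 2 ^ (r - 1)"
  proof -
    have "(2::nat) ^ r = 2 * 2 ^ (r - 1)" using r1 by (cases r) simp_all
    thus ?thesis using sdiv cTY by (simp add: algebra_simps)
  qed
  obtain B where B: "\<forall>i\<in>TY. B i \<subseteq> X i \<and> card (B i) = s \<and> finite (B i)"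
      "\<forall>i j. i \<noteq> j \<longrightarrow> B i \<inter> B j = {}" "\<forall>i. i \<notin> TY \<longrightarrow> B i = {}"
    using greedy[of TY X "2 ^ (r - 1)" s] Xc cN by (auto simp: TY_def)
  define W where "W = {D \<in> T. s < card (pig D) + 2}"
  have finW: "finite W" unfolding W_def using finT by simp
  have Wp: "D \<subseteq> lits m r \<and> k \<le> card (pig D)" if "D \<in> W" for D
    using that Tsub by (auto simp: W_def k_def)
  define q where "q = 1 - 1 / (2 * real r)"
  have q0: "0 < q" using r1 by (simp add: q_def field_simps)
  have qe: "q \<le> exp (- 1 / (2 * real r))" unfolding q_def
    using exp_ge_add_one_self[of "- 1 / (2 * real r)"] by simp
  have "q ^ k \<le> exp (- 1 / (2 * real r)) ^ k" by (rule power_mono[OF qe]) (use q0 in simp)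
  also have "\<dots> = exp (real k * (- 1 / (2 * real r)))" by (rule exp_of_nat_mult[symmetric])
  finally have qk: "q ^ k \<le> exp (- real k / (2 * real r))" by simp
  have xk: "x \<le> real k / (2 * real r)"
  proof -
    have "real (2 ^ r) \<le> 16 * real r * real k" using key by (metis of_nat_le_iff of_nat_mult of_nat_numeral)
    moreover have "real r > 0" using r1 by simp
    ultimately show ?thesis unfolding x_def by (simp add: field_simps power2_eq_square)
  qed
  have "real (card W) * q ^ k \<le> real (card T) * q ^ k"
    by (rule mult_right_mono) (use finT q0 in \<open>auto simp: W_def intro: card_mono\<close>)
  also have "\<dots> < exp x * q ^ k" by (rule mult_strict_right_mono[OF lt]) (use q0 in simp)
  also have "\<dots> \<le> exp x * exp (- real k / (2 * real r))" by (rule mult_left_mono[OF qk]) simp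
  also have "\<dots> = exp (x - real k / (2 * real r))" by (simp add: exp_add[symmetric])
  also have "\<dots> \<le> 1" using xk by simp
  finally have small: "real (card W) * (1 - 1 / (2 * real r)) ^ k < 1" by (simp add: q_def)
  obtain \<tau> where \<tau>: "\<tau> \<in> PiE {..<m} (\<lambda>_. {..<r} \<times> (UNIV::bool set))"
      "\<forall>D\<in>W. \<exists>p j c. ((p,j),c) \<in> D \<and> \<tau> p = (j, \<not> c)"
    using exists_tau[OF r1 finW Wp small] by blast
  have finB: "finite (B t)" for t
  proof (cases "t \<in> TY")
    case True
    thus ?thesis using B(1) by blast
  next
    case False
    hence "B t = {}" using B(3) by blast
    thus ?thesis by simp
  qed
  have disj: "B t \<inter> B t' = {}" if "t \<noteq> t'" for t t' using B(2) that by blast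
  have cardB: "card (B (\<tau> p)) = s" if "p < m" for p
  proof -
    have "\<tau> p \<in> TY" using \<tau>(1) that by (auto simp: TY_def PiE_iff)
    thus ?thesis using B(1) by blast
  qed
  have inH: "a \<in> PiE {..<r} (\<lambda>_. UNIV) \<and> a (fst t) = snd t" if "a \<in> B t" for t a
  proof -
    have "t \<in> TY" using that B(3) by blast
    hence "a \<in> X t" using B(1) that by blast
    thus ?thesis by (simp add: X_def)
  qed
  have killed: "\<exists>p j c. ((p,j),c) \<in> D \<and> \<tau> p = (j, \<not> c)"
    if "D \<in> (\<Union>c\<in>S. sa_terms c)" "s < card (pig D) + 2" for D
    using \<tau>(2) that by (auto simp: W_def T_def)
  have "\<forall>c\<in>S. sa_sat (Zf \<tau> B s) c"
    by (rule construct_sat[where B=B and \<tau>=\<tau> and s=s and m=m and r=r, OF v finB disj cardB inH killed])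
  moreover have "Zf \<tau> B s {} = 1" by (rule Zf_empty)
  ultimately show False using ref by (auto simp: sa_refutation_def)
qed



lemma small_pow: "1 \<le> r \<Longrightarrow> r \<le> 6 \<Longrightarrow> (2::nat) ^ r \<le> 16 * r ^ 2"
proof -
  assume r: "1 \<le> r" "r \<le> 6"
  show ?thesis
  proof (cases "r = 1")
    case True thus ?thesis by simp
  next
    case False
    hence "2 \<le> r" using r by simp
    have "(2::nat) ^ r \<le> 2 ^ 6" by (rule power_increasing[OF r(2)]) simp
    also have "\<dots> \<le> 16 * 2 ^ 2" by simp
    also have "\<dots> \<le> 16 * r ^ 2" using power_mono[OF \<open>2 \<le> r\<close>, of 2] by simp
    finally show ?thesis .
  qed
qed

theorem corollary7:
  fixes m n r :: nat and S :: "sa_constr set"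
  assumes "n = 2 ^ r" and "m > n" and "sa_refutation m r S"
  shows "exp (real n / (32 * (log 2 (real n))\<^sup>2)) \<le> real (sa_num_terms S)"
proof -
  have ln: "log 2 (real n) = real r" using log2_of_power_eq[of n r] assms(1) by simp
  consider "r = 0" | "1 \<le> r \<and> r \<le> 6" | "7 \<le> r" by linarith
  thus ?thesis
  proof cases
    case 1
    hence e: "exp (real n / (32 * (log 2 (real n))\<^sup>2)) = 1" using ln by simp
    have "1 \<le> sa_num_terms S" by (rule one_term[OF assms(3)])
    hence "(1::real) \<le> real (sa_num_terms S)" by simp
    thus ?thesis unfolding e .
  next
    case 2
    have p: "(2::nat) ^ r \<le> 16 * r ^ 2" using small_pow 2 by blast
    have "real n / (32 * (log 2 (real n))\<^sup>2) = real (2 ^ r) / (32 * (real r)\<^sup>2)"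
      using ln assms(1) by simp
    also have "\<dots> \<le> 1 / 2"
    proof -
      have "real ((2::nat) ^ r) \<le> 16 * (real r)\<^sup>2" using p by (metis of_nat_le_iff of_nat_mult of_nat_numeral of_nat_power)
      moreover have "real r > 0" using 2 by simp
      ultimately show ?thesis by (simp add: field_simps)
    qed
    finally have "exp (real n / (32 * (log 2 (real n))\<^sup>2)) \<le> exp (1/2)" by simp
    also have "\<dots> \<le> 2" by (rule exp_half)
    also have "\<dots> \<le> real (sa_num_terms S)" using two_terms[of r m S] 2 assms(3) by simp
    finally show ?thesis .
  next
    case 3
    have "real n / (32 * (log 2 (real n))\<^sup>2) = real (2 ^ r) / (32 * (real r)\<^sup>2)"
      using ln assms(1) by simp
    thus ?thesis using big_case[OF 3 assms(3)] by simp
  qed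
qed


end
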